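(* Let $X$ be a quandle, $A$ an abelian group, and $\varphi:X\times X\to A$ a quandle 2-cocycle. Let $E=X\times_\varphi A$ be the abelian extension with operation $(x,a)\star(y,b)=(x*y,\ a+\varphi(x,y))$, and $\pi:E\to X$ the projection $(x,a)\mapsto x$. Then there is a cochain map $\kappa^*:C_b^*(E,\mathbb R)\to C_b^*(X,\mathbb R)$ with $\|\kappa^n f\|_\infty\le\|f\|_\infty$ and $\kappa^n\circ\pi^n_b=\mathrm{id}$ for all $n\ge1$, where $\pi^n_b f=f\circ\pi^{\times n}$. Consequently, the induced map $\pi_b^*:H_b^n(X,\mathbb R)\to H_b^n(E,\mathbb R)$ is injective for every $n\ge1$.
   Context: A quandle 2-cocycle with values in an abelian group $A$ is a map $\varphi:X\times X\to A$ with $\varphi(x,x)=0$ and $\varphi(x,y)+\varphi(x*y,z)=\varphi(x,z)+\varphi(x*z,y*z)$ for all $x,y,z\in X$; then $E=X\times_\varphi A$ is a quandle. For a quandle (or rack) $Y$, $C_b^n(Y,\mathbb R)$ is the space of bounded maps $Y^n\to\mathbb R$ ($Y^0$ a point), with coboundary $\delta f(y_1,\dots,y_n)=\sum_{i=2}^n(-1)^i\big(f(y_1,\dots,\widehat{y_i},\dots,y_n)-f(y_1*y_i,\dots,y_{i-1}*y_i,y_{i+1},\dots,y_n)\big)$; $H_b^n(Y,\mathbb R)$ is the cohomology of this complex. (Abelian groups admit a left-invariant mean, i.e. a positive, normalized, translation-invariant linear functional on bounded real functions.) *)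

theory Defs
  imports Complex_Main
begin

text \<open>Quandles/racks are modelled on a type with a binary operation q, q x y = x * y.\<close>

definition rack :: "('y \<Rightarrow> 'y \<Rightarrow> 'y) \<Rightarrow> bool" where
  "rack q \<longleftrightarrow> (\<forall>y. bij (\<lambda>x. q x y)) \<and> (\<forall>x y z. q (q x y) z = q (q x z) (q y z))"

definition quandle :: "('y \<Rightarrow> 'y \<Rightarrow> 'y) \<Rightarrow> bool" where
  "quandle q \<longleftrightarrow> (\<forall>x. q x x = x) \<and> rack q"

definition quandle_2cocycle ::
  "('x \<Rightarrow> 'x \<Rightarrow> 'x) \<Rightarrow> ('x \<Rightarrow> 'x \<Rightarrow> 'a::ab_group_add) \<Rightarrow> bool" where
  "quandle_2cocycle q \<phi> \<longleftrightarrow> (\<forall>x. \<phi> x x = 0) \<and>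
     (\<forall>x y z. \<phi> x y + \<phi> (q x y) z = \<phi> x z + \<phi> (q x z) (q y z))"

definition ext_op ::
  "('x \<Rightarrow> 'x \<Rightarrow> 'x) \<Rightarrow> ('x \<Rightarrow> 'x \<Rightarrow> 'a::ab_group_add) \<Rightarrow> ('x \<times> 'a) \<Rightarrow> ('x \<times> 'a) \<Rightarrow> ('x \<times> 'a)" where
  "ext_op q \<phi> u v = (q (fst u) (fst v), snd u + \<phi> (fst u) (fst v))"

text \<open>n-cochains: maps Y^n \<rightarrow> R, encoded as functions on lists, supported on lists of
  length n (value 0 elsewhere), bounded on lists of length n.\<close>
definition Cb :: "nat \<Rightarrow> ('y list \<Rightarrow> real) set" where
  "Cb n = {f. (\<exists>B. \<forall>ys. length ys = n \<longrightarrow> \<bar>f ys\<bar> \<le> B) \<and> (\<forall>ys. length ys \<noteq> n \<longrightarrow> f ys = 0)}"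

text \<open>Coboundary C^n \<rightarrow> C^(n+1). For a list ys = [y_1,...,y_(n+1)] the paper's index i
  (2..n+1) corresponds to the 0-based position i-1 (1..n).\<close>
definition cob :: "('y \<Rightarrow> 'y \<Rightarrow> 'y) \<Rightarrow> nat \<Rightarrow> ('y list \<Rightarrow> real) \<Rightarrow> ('y list \<Rightarrow> real)" where
  "cob q n f = (\<lambda>ys. if length ys = Suc n then
      (\<Sum>i\<in>{1..n}. (-1) ^ (Suc i) *
         (f (take i ys @ drop (Suc i) ys)
          - f (map (\<lambda>y. q y (ys ! i)) (take i ys) @ drop (Suc i) ys)))
     else 0)"

definition supnorm :: "nat \<Rightarrow> ('y list \<Rightarrow> real) \<Rightarrow> real" where
  "supnorm n f = (SUP ys\<in>{ys. length ys = n}. \<bar>f ys\<bar>)"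

definition pib :: "nat \<Rightarrow> ('x list \<Rightarrow> real) \<Rightarrow> (('x \<times> 'a) list \<Rightarrow> real)" where
  "pib n f = (\<lambda>es. f (map fst es))"

definition Zb :: "('y \<Rightarrow> 'y \<Rightarrow> 'y) \<Rightarrow> nat \<Rightarrow> ('y list \<Rightarrow> real) set" where
  "Zb q n = {f \<in> Cb n. cob q n f = (\<lambda>_. 0)}"

definition Bb :: "('y \<Rightarrow> 'y \<Rightarrow> 'y) \<Rightarrow> nat \<Rightarrow> ('y list \<Rightarrow> real) set" where
  "Bb q n = (case n of 0 \<Rightarrow> {\<lambda>_. 0} | Suc m \<Rightarrow> cob q m ` Cb m)"

text \<open>Two cocycles define the same class in H_b^n iff they are cohomologous.\<close>
definition cohomologous :: "('y \<Rightarrow> 'y \<Rightarrow> 'y) \<Rightarrow> nat \<Rightarrow> ('y list \<Rightarrow> real) \<Rightarrow> ('y list \<Rightarrow> real) \<Rightarrow> bool" where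
  "cohomologous q n f g \<longleftrightarrow> (\<lambda>ys. f ys - g ys) \<in> Bb q n"

end

theory Submission
  imports Defs
begin

lemma HB:
  fixes S :: "('b \<Rightarrow> real) set" and p :: "('b \<Rightarrow> real) \<Rightarrow> real"
  assumes S0: "(\<lambda>_. 0) \<in> S"
    and Sadd: "\<And>f g. f\<in>S \<Longrightarrow> g\<in>S \<Longrightarrow> (\<lambda>x. f x + g x) \<in> S"
    and Ssc: "\<And>f c. f\<in>S \<Longrightarrow> (\<lambda>x. c * f x) \<in> S"
    and padd: "\<And>f g. f\<in>S \<Longrightarrow> g\<in>S \<Longrightarrow> p (\<lambda>x. f x + g x) \<le> p f + p g"
    and psc: "\<And>f c. f\<in>S \<Longrightarrow> c > 0 \<Longrightarrow> p (\<lambda>x. c * f x) = c * p f"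
  shows "\<exists>L. (\<forall>f\<in>S. \<forall>g\<in>S. L (\<lambda>x. f x + g x) = L f + L g)
           \<and> (\<forall>f\<in>S. \<forall>c. L (\<lambda>x. c * f x) = c * L f) \<and> (\<forall>f\<in>S. L f \<le> p f)"
proof -
  define good where "good G \<longleftrightarrow>
     (\<forall>f a. (f,a)\<in>G \<longrightarrow> f \<in> S \<and> a \<le> p f)
   \<and> (\<forall>f a g b. (f,a)\<in>G \<longrightarrow> (g,b)\<in>G \<longrightarrow> ((\<lambda>x. f x + g x), a+b) \<in> G)
   \<and> (\<forall>f a c. (f,a)\<in>G \<longrightarrow> ((\<lambda>x. c * f x), c*a) \<in> G)
   \<and> (\<forall>f a b. (f,a)\<in>G \<longrightarrow> (f,b)\<in>G \<longrightarrow> a = b) \<and> G \<noteq> {}" for G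
  define A where "A = {G. good G}"
  have p0: "p (\<lambda>_. 0) = 0"
    using psc[OF S0, of 2] by simp
  have good0: "good {((\<lambda>_. 0), 0)}"
    unfolding good_def using S0 p0 by auto
  have "\<forall>C\<in>chains A. \<exists>U\<in>A. \<forall>X\<in>C. X \<subseteq> U"
  proof
    fix C assume C: "C \<in> chains A"
    hence CA: "C \<subseteq> A" and ch: "\<And>X Y. X\<in>C \<Longrightarrow> Y\<in>C \<Longrightarrow> X \<subseteq> Y \<or> Y \<subseteq> X"
      unfolding chains_def chain_subset_def by auto
    show "\<exists>U\<in>A. \<forall>X\<in>C. X \<subseteq> U"
    proof (cases "C = {}")
      case True thus ?thesis using good0 A_def by auto
    next
      case False
      have gX: "\<And>X. X \<in> C \<Longrightarrow> good X" using CA A_def by auto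
      have "good (\<Union>C)"
        unfolding good_def
      proof (intro conjI allI impI)
        fix f a assume "(f,a) \<in> \<Union>C" then show "f \<in> S" "a \<le> p f" using gX unfolding good_def by blast+
      next
        fix f a g b assume 1: "(f,a) \<in> \<Union>C" and 2: "(g,b) \<in> \<Union>C"
        then obtain X Y where X: "X\<in>C" "(f,a)\<in>X" and Y: "Y\<in>C" "(g,b)\<in>Y" by blast
        show "((\<lambda>x. f x + g x), a+b) \<in> \<Union>C"
        proof (cases "X \<subseteq> Y")
          case True thus ?thesis using X Y gX[OF Y(1)] unfolding good_def by blast
        next
          case False hence "Y \<subseteq> X" using ch X Y by blast
          thus ?thesis using X Y gX[OF X(1)] unfolding good_def by blast
        qed
      next
        fix f a c assume "(f,a) \<in> \<Union>C"
        then obtain X where X: "X\<in>C" "(f,a)\<in>X" by blast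
        thus "((\<lambda>x. c * f x), c*a) \<in> \<Union>C" using gX[OF X(1)] unfolding good_def by blast
      next
        fix f a b assume 1: "(f,a) \<in> \<Union>C" and 2: "(f,b) \<in> \<Union>C"
        then obtain X Y where X: "X\<in>C" "(f,a)\<in>X" and Y: "Y\<in>C" "(f,b)\<in>Y" by blast
        show "a = b"
        proof (cases "X \<subseteq> Y")
          case True thus ?thesis using X Y gX[OF Y(1)] unfolding good_def by blast
        next
          case False hence "Y \<subseteq> X" using ch X Y by blast
          thus ?thesis using X Y gX[OF X(1)] unfolding good_def by blast
        qed
      next
        show "\<Union>C \<noteq> {}" using False gX unfolding good_def by blast
      qed
      thus ?thesis using A_def by auto
    qed
  qed
  from Zorn_Lemma2[OF this] obtain M where MA: "M \<in> A" and Mmax: "\<And>X. X\<in>A \<Longrightarrow> M \<subseteq> X \<Longrightarrow> X = M"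
    by blast
  have gM: "good M" using MA A_def by auto
  have Madd: "\<And>f a g b. (f,a)\<in>M \<Longrightarrow> (g,b)\<in>M \<Longrightarrow> ((\<lambda>x. f x + g x), a+b) \<in> M"
    and Msc: "\<And>f a c. (f,a)\<in>M \<Longrightarrow> ((\<lambda>x. c * f x), c*a) \<in> M"
    and Mfun: "\<And>f a b. (f,a)\<in>M \<Longrightarrow> (f,b)\<in>M \<Longrightarrow> a = b"
    and Mp: "\<And>f a. (f,a)\<in>M \<Longrightarrow> f \<in> S \<and> a \<le> p f"
    using gM unfolding good_def by blast+
  have M0: "((\<lambda>_. 0), 0) \<in> M"
  proof -
    obtain f a where "(f,a) \<in> M" using gM unfolding good_def by auto
    from Msc[OF this, of 0] show ?thesis by simp
  qed
  have dom: "\<exists>a. (f0,a) \<in> M" if f0S: "f0 \<in> S" for f0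
  proof (rule ccontr)
    assume nf: "\<not> (\<exists>a. (f0,a) \<in> M)"
    define Lo where "Lo = {b - p (\<lambda>x. g x + (-1) * f0 x) | g b. (g,b) \<in> M}"
    define Hi where "Hi = {p (\<lambda>x. h x + f0 x) - d | h d. (h,d) \<in> M}"
    have key: "b - p (\<lambda>x. g x + (-1) * f0 x) \<le> p (\<lambda>x. h x + f0 x) - d"
      if "(g,b)\<in>M" "(h,d)\<in>M" for g b h d
    proof -
      have gS: "g \<in> S" and hS: "h \<in> S" using Mp that by auto
      have m1: "(\<lambda>x. g x + (-1) * f0 x) \<in> S" by (rule Sadd[OF gS Ssc[OF f0S]])
      have m2: "(\<lambda>x. h x + f0 x) \<in> S" using Sadd[OF hS f0S] by simp
      have "b + d \<le> p (\<lambda>x. g x + h x)" using Mp[OF Madd[OF that]] by simp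
      also have "(\<lambda>x. g x + h x) = (\<lambda>x. (g x + (-1) * f0 x) + (h x + f0 x))" by auto
      also have "p \<dots> \<le> p (\<lambda>x. g x + (-1) * f0 x) + p (\<lambda>x. h x + f0 x)"
        using padd[OF m1 m2] by simp
      finally show ?thesis by simp
    qed
    have LoNE: "Lo \<noteq> {}" using M0 Lo_def by auto
    have HiNE: "Hi \<noteq> {}" using M0 Hi_def by auto
    have LoHi: "\<And>l u. l \<in> Lo \<Longrightarrow> u \<in> Hi \<Longrightarrow> l \<le> u" using key Lo_def Hi_def by auto
    define a0 where "a0 = Sup Lo"
    have bddLo: "bdd_above Lo" using HiNE LoHi by (meson bdd_above.I ex_in_conv)
    have lo: "\<And>l. l \<in> Lo \<Longrightarrow> l \<le> a0" unfolding a0_def using bddLo by (simp add: cSup_upper)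
    have hi: "\<And>u. u \<in> Hi \<Longrightarrow> a0 \<le> u" unfolding a0_def using LoNE LoHi by (meson cSup_least)
    define G' where "G' = {((\<lambda>x. g x + c * f0 x), b + c * a0) | g b c. (g,b) \<in> M}"
    have bound: "b + c * a0 \<le> p (\<lambda>x. g x + c * f0 x)" if gb: "(g,b) \<in> M" for g b c
    proof -
      have gS: "g \<in> S" using Mp gb by auto
      consider "c = 0" | "c > 0" | "c < 0" by linarith
      then show ?thesis
      proof cases
        case 1 thus ?thesis using Mp gb by simp
      next
        case 2
        have "((\<lambda>x. (1/c) * g x), (1/c) * b) \<in> M" using Msc[OF gb] .
        hence "a0 \<le> p (\<lambda>x. (\<lambda>x. (1/c) * g x) x + f0 x) - (1/c) * b" using hi Hi_def by blast
        hence "c * a0 \<le> c * (p (\<lambda>x. (1/c) * g x + f0 x) - (1/c) * b)" using 2 by simp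
        also have "\<dots> = p (\<lambda>x. c * ((1/c) * g x + f0 x)) - b"
        proof -
          have "p (\<lambda>x. c * ((1/c) * g x + f0 x)) = c * p (\<lambda>x. (1/c) * g x + f0 x)"
            by (rule psc[OF Sadd[OF Ssc[OF gS] f0S] 2])
          thus ?thesis using 2 by (simp add: algebra_simps)
        qed
        also have "(\<lambda>x. c * ((1/c) * g x + f0 x)) = (\<lambda>x. g x + c * f0 x)"
          using 2 by (auto simp: algebra_simps)
        finally show ?thesis by simp
      next
        case 3
        define e where "e = - c"
        have e: "e > 0" using 3 e_def by simp
        have "((\<lambda>x. (1/e) * g x), (1/e) * b) \<in> M" using Msc[OF gb] .
        hence "(1/e) * b - p (\<lambda>x. (\<lambda>x. (1/e) * g x) x + (-1) * f0 x) \<le> a0" using lo Lo_def by blast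
        hence "e * ((1/e) * b - p (\<lambda>x. (1/e) * g x + (-1) * f0 x)) \<le> e * a0" using e by simp
        hence "b - p (\<lambda>x. e * ((1/e) * g x + (-1) * f0 x)) \<le> e * a0"
        proof -
          have "p (\<lambda>x. e * ((1/e) * g x + (-1) * f0 x)) = e * p (\<lambda>x. (1/e) * g x + (-1) * f0 x)"
            by (rule psc[OF Sadd[OF Ssc[OF gS] Ssc[OF f0S]] e])
          thus ?thesis using e \<open>e * ((1/e) * b - p (\<lambda>x. (1/e) * g x + (-1) * f0 x)) \<le> e * a0\<close>
            by (simp add: algebra_simps)
        qed
        also have "(\<lambda>x. e * ((1/e) * g x + (-1) * f0 x)) = (\<lambda>x. g x + c * f0 x)"
          using e by (auto simp: algebra_simps e_def)
        finally show ?thesis by (simp add: e_def)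
      qed
    qed
    have memG': "((\<lambda>x. g x + c * f0 x), b + c * a0) \<in> G'" if "(g,b) \<in> M" for g b c
      using that unfolding G'_def by blast
    have "good G'"
      unfolding good_def
    proof (intro conjI allI impI)
      fix f a assume "(f,a) \<in> G'"
      then obtain g b c where f: "f = (\<lambda>x. g x + c * f0 x)" "a = b + c * a0" "(g,b) \<in> M"
        unfolding G'_def by blast
      show "f \<in> S" using f Sadd Ssc Mp f0S by blast
      show "a \<le> p f" using f bound by simp
    next
      fix f a f' a' assume "(f,a) \<in> G'" "(f',a') \<in> G'"
      then obtain g b c g' b' c' where f: "f = (\<lambda>x. g x + c * f0 x)" "a = b + c * a0" "(g,b) \<in> M"
        and f': "f' = (\<lambda>x. g' x + c' * f0 x)" "a' = b' + c' * a0" "(g',b') \<in> M"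
        unfolding G'_def by blast
      have "((\<lambda>x. g x + g' x), b + b') \<in> M" using Madd f(3) f'(3) .
      from memG'[OF this, of "c + c'"] have X: "((\<lambda>x. (g x + g' x) + (c + c') * f0 x), (b + b') + (c + c') * a0) \<in> G'" .
      moreover have "(\<lambda>x. f x + f' x) = (\<lambda>x. (g x + g' x) + (c + c') * f0 x)"
        using f f' by (auto simp: algebra_simps)
      moreover have "a + a' = (b + b') + (c + c') * a0" using f f' by (simp add: algebra_simps)
      ultimately show "((\<lambda>x. f x + f' x), a + a') \<in> G'" by metis
    next
      fix f a k assume "(f,a) \<in> G'"
      then obtain g b c where f: "f = (\<lambda>x. g x + c * f0 x)" "a = b + c * a0" "(g,b) \<in> M"
        unfolding G'_def by blast
      have "((\<lambda>x. k * g x), k * b) \<in> M" using Msc f(3) .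
      from memG'[OF this, of "k * c"] have X: "((\<lambda>x. k * g x + (k * c) * f0 x), k * b + (k * c) * a0) \<in> G'" .
      moreover have "(\<lambda>x. k * f x) = (\<lambda>x. k * g x + (k * c) * f0 x)"
        using f by (auto simp: algebra_simps)
      moreover have "k * a = k * b + (k * c) * a0" using f by (simp add: algebra_simps)
      ultimately show "((\<lambda>x. k * f x), k * a) \<in> G'" by metis
    next
      fix f a a' assume "(f,a) \<in> G'" "(f,a') \<in> G'"
      then obtain g b c g' b' c' where f: "f = (\<lambda>x. g x + c * f0 x)" "a = b + c * a0" "(g,b) \<in> M"
        and f': "f = (\<lambda>x. g' x + c' * f0 x)" "a' = b' + c' * a0" "(g',b') \<in> M"
        unfolding G'_def by blast
      have eq: "\<And>x. g x + c * f0 x = g' x + c' * f0 x" using f f' by metis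
      show "a = a'"
      proof (cases "c = c'")
        case True
        hence "g = g'" using eq by auto
        thus ?thesis using f f' True Mfun by auto
      next
        case False
        have "((\<lambda>x. (-1) * g' x), (-1) * b') \<in> M" using Msc f'(3) .
        from Madd[OF f(3) this] have "((\<lambda>x. g x + (-1) * g' x), b + (-1) * b') \<in> M" .
        from Msc[OF this, of "1/(c' - c)"]
        have "((\<lambda>x. (1/(c'-c)) * (g x + (-1) * g' x)), (1/(c'-c)) * (b + (-1) * b')) \<in> M" .
        moreover have "(\<lambda>x. (1/(c'-c)) * (g x + (-1) * g' x)) = f0"
        proof
          fix x have "g x - g' x = (c' - c) * f0 x" using eq[of x] by (simp add: algebra_simps)
          thus "(1/(c'-c)) * (g x + (-1) * g' x) = f0 x" using False by (simp add: field_simps)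
        qed
        ultimately show ?thesis using nf by auto
      qed
    next
      show "G' \<noteq> {}" using memG'[OF M0] by blast
    qed
    moreover have "M \<subseteq> G'"
    proof
      fix z assume "z \<in> M"
      then obtain g b where z: "z = (g,b)" "(g,b) \<in> M" by (cases z) auto
      have "z = ((\<lambda>x. g x + 0 * f0 x), b + 0 * a0)" using z by simp
      thus "z \<in> G'" using z G'_def by blast
    qed
    ultimately have "G' = M" using Mmax A_def by auto
    moreover have "(f0, a0) \<in> G'"
    proof -
      have "(f0, a0) = ((\<lambda>x. (\<lambda>_. 0) x + 1 * f0 x), 0 + 1 * a0)" by simp
      thus ?thesis using memG'[OF M0, of 1] by metis
    qed
    ultimately show False using nf by auto
  qed
  define L where "L f = (THE a. (f,a) \<in> M)" for f
  have LM: "(f, L f) \<in> M" if fS: "f \<in> S" for f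
  proof -
    obtain a where a: "(f,a) \<in> M" using dom[OF fS] by auto
    have "L f = a" unfolding L_def using a Mfun by blast
    thus ?thesis using a by simp
  qed
  have Leq: "L f = a" if "(f,a) \<in> M" for f a
    using LM[of f] Mp[OF that] Mfun[OF that] by auto
  show ?thesis
  proof (intro exI conjI ballI allI)
    fix f g assume "f \<in> S" "g \<in> S"
    show "L (\<lambda>x. f x + g x) = L f + L g" using Leq[OF Madd[OF LM LM]] \<open>f \<in> S\<close> \<open>g \<in> S\<close> by blast
  next
    fix f c assume "f \<in> S"
    show "L (\<lambda>x. c * f x) = c * L f" using Leq[OF Msc[OF LM]] \<open>f \<in> S\<close> by blast
  next
    fix f assume "f \<in> S"
    show "L f \<le> p f" using Mp[OF LM[OF \<open>f \<in> S\<close>]] by simp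
  qed
qed


definition bddf :: "('b \<Rightarrow> real) \<Rightarrow> bool" where
  "bddf f \<longleftrightarrow> (\<exists>B. \<forall>x. \<bar>f x\<bar> \<le> B)"

definition avg :: "'a::ab_group_add list \<Rightarrow> ('a \<Rightarrow> real) \<Rightarrow> 'a \<Rightarrow> real" where
  "avg ts f x = sum_list (map (\<lambda>t. f (x + t)) ts) / real (length ts)"

definition Sg :: "'a::ab_group_add list \<Rightarrow> ('a \<Rightarrow> real) \<Rightarrow> real" where
  "Sg ts f = (SUP x. avg ts f x)"

definition pD :: "('a::ab_group_add \<Rightarrow> real) \<Rightarrow> real" where
  "pD f = Inf {Sg ts f | ts. ts \<noteq> []}"

lemma sl_bound: "(\<And>t. \<bar>g t\<bar> \<le> B) \<Longrightarrow> \<bar>sum_list (map g ts)\<bar> \<le> real (length ts) * B"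
proof (induction ts)
  case Nil thus ?case by simp
next
  case (Cons a ts)
  have "\<bar>g a + sum_list (map g ts)\<bar> \<le> \<bar>g a\<bar> + \<bar>sum_list (map g ts)\<bar>" by (rule abs_triangle_ineq)
  also have "\<dots> \<le> B + real (length ts) * B" using Cons by (intro add_mono) auto
  finally show ?case by (simp add: algebra_simps)
qed

lemma sl_le: "(\<And>t. t \<in> set ts \<Longrightarrow> g t \<le> B) \<Longrightarrow> sum_list (map g ts) \<le> real (length ts) * B"
  by (induction ts) (auto simp: algebra_simps intro: add_mono)

lemma sl_swap: "sum_list (map (\<lambda>t. sum_list (map (\<lambda>s. F t s :: real) ss)) ts)
   = sum_list (map (\<lambda>s. sum_list (map (\<lambda>t. F t s) ts)) ss)"
proof (induction ts)
  case (Cons a ts)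
  have "sum_list (map (\<lambda>s. F a s + sum_list (map (\<lambda>t. F t s) ts)) ss)
     = sum_list (map (\<lambda>s. F a s) ss) + sum_list (map (\<lambda>s. sum_list (map (\<lambda>t. F t s) ts)) ss)"
    by (rule sum_list_addf)
  thus ?case using Cons by simp
qed simp

lemma avg_bound:
  assumes "\<And>x. \<bar>f x\<bar> \<le> B" "ts \<noteq> []"
  shows "\<bar>avg ts f x\<bar> \<le> B"
proof -
  have "\<bar>sum_list (map (\<lambda>t. f (x + t)) ts)\<bar> \<le> real (length ts) * B"
    using assms(1) by (intro sl_bound) auto
  moreover have "real (length ts) > 0" using assms(2) by simp
  ultimately show ?thesis unfolding avg_def by (simp add: field_simps)
qed

lemma Sg_props:
  assumes "\<And>x. \<bar>f x\<bar> \<le> B" "ts \<noteq> []"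
  shows "avg ts f x \<le> Sg ts f" "Sg ts f \<le> B" "- B \<le> Sg ts f"
proof -
  have bd: "bdd_above (range (avg ts f))"
    using avg_bound[OF assms] by (intro bdd_aboveI[of _ B]) (auto simp: abs_le_iff)
  show 1: "avg ts f x \<le> Sg ts f" unfolding Sg_def by (rule cSUP_upper[OF _ bd]) auto
  show "Sg ts f \<le> B" unfolding Sg_def using avg_bound[OF assms]
    by (intro cSUP_least) (auto simp: abs_le_iff)
  have "\<bar>avg ts f x\<bar> \<le> B" by (rule avg_bound[OF assms])
  thus "- B \<le> Sg ts f" using 1 by (simp add: abs_le_iff)
qed

lemma pD_props:
  assumes "\<And>x. \<bar>f x\<bar> \<le> B" "ts \<noteq> []"
  shows "pD f \<le> Sg ts f"
proof -
  have "bdd_below {Sg ts f | ts. ts \<noteq> []}"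
    using Sg_props(3)[OF assms(1)] by (intro bdd_belowI[of _ "-B"]) auto
  thus ?thesis unfolding pD_def by (rule cInf_lower[rotated]) (use assms in auto)
qed

lemma pD_greatest:
  assumes "\<And>ts. ts \<noteq> [] \<Longrightarrow> c \<le> Sg ts (f::'a::ab_group_add \<Rightarrow> real)"
  shows "c \<le> pD f"
  unfolding pD_def
proof (rule cInf_greatest)
  show "{Sg ts f |ts. ts \<noteq> []} \<noteq> {}" by (auto intro!: exI[of _ "[0]"])
qed (use assms in auto)

lemma avg_le_Sg: "(\<And>x. avg ts f x \<le> c) \<Longrightarrow> Sg ts f \<le> c"
  unfolding Sg_def by (rule cSUP_least) auto

lemma pD_add:
  fixes f g :: "'a::ab_group_add \<Rightarrow> real"
  assumes f: "\<And>x. \<bar>f x\<bar> \<le> B1" and g: "\<And>x. \<bar>g x\<bar> \<le> B2"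
  shows "pD (\<lambda>x. f x + g x) \<le> pD f + pD g"
proof -
  have fg: "\<And>x. \<bar>f x + g x\<bar> \<le> B1 + B2" using f g by (meson abs_triangle_ineq add_mono order_trans)
  have main: "pD (\<lambda>x. f x + g x) \<le> Sg ts f + Sg ss g" if ts: "ts \<noteq> []" and ss: "ss \<noteq> []" for ts ss
  proof -
    define us where "us = concat (map (\<lambda>t. map (\<lambda>s. t + s) ss) ts)"
    have lus: "length us = length ts * length ss" unfolding us_def
      by (induction ts) auto
    have usne: "us \<noteq> []" using lus ts ss by auto
    have "avg us (\<lambda>x. f x + g x) x \<le> Sg ts f + Sg ss g" for x
    proof -
      let ?n = "real (length ts)" and ?m = "real (length ss)"
      have n: "?n > 0" and m: "?m > 0" using ts ss by auto
      have su: "sum_list (map h us) = sum_list (map (\<lambda>t. sum_list (map (\<lambda>s. h (t + s)) ss)) ts)" for h :: "'a \<Rightarrow> real"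
        unfolding us_def by (induction ts) (simp_all add: comp_def)
      have sf: "sum_list (map (\<lambda>t. sum_list (map (\<lambda>s. f (x + (t + s))) ss)) ts) \<le> ?n * ?m * Sg ts f"
      proof -
        have "sum_list (map (\<lambda>t. sum_list (map (\<lambda>s. f (x + (t + s))) ss)) ts)
            = sum_list (map (\<lambda>s. sum_list (map (\<lambda>t. f ((x + s) + t)) ts)) ss)"
          by (subst sl_swap) (simp add: add_ac)
        also have "\<dots> = sum_list (map (\<lambda>s. ?n * avg ts f (x + s)) ss)"
          unfolding avg_def using n by simp
        also have "\<dots> \<le> ?m * (?n * Sg ts f)"
          by (rule sl_le) (use Sg_props(1)[OF f ts] n in auto)
        finally show ?thesis by (simp add: algebra_simps)
      qed
      have sg: "sum_list (map (\<lambda>t. sum_list (map (\<lambda>s. g (x + (t + s))) ss)) ts) \<le> ?n * ?m * Sg ss g"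
      proof -
        have "sum_list (map (\<lambda>t. sum_list (map (\<lambda>s. g (x + (t + s))) ss)) ts)
            = sum_list (map (\<lambda>t. ?m * avg ss g (x + t)) ts)"
          unfolding avg_def using m by (simp add: add_ac)
        also have "\<dots> \<le> ?n * (?m * Sg ss g)"
          by (rule sl_le) (use Sg_props(1)[OF g ss] m in auto)
        finally show ?thesis by (simp add: algebra_simps)
      qed
      have "avg us (\<lambda>x. f x + g x) x
          = (sum_list (map (\<lambda>t. sum_list (map (\<lambda>s. f (x + (t + s))) ss)) ts)
           + sum_list (map (\<lambda>t. sum_list (map (\<lambda>s. g (x + (t + s))) ss)) ts)) / (?n * ?m)"
        unfolding avg_def su[of "\<lambda>u. f (x + u) + g (x + u)"] lus by (simp add: sum_list_addf)
      also have "\<dots> \<le> (?n * ?m * Sg ts f + ?n * ?m * Sg ss g) / (?n * ?m)"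
        using sf sg n m by (intro divide_right_mono) auto
      also have "\<dots> = Sg ts f + Sg ss g" using n m by (simp add: field_simps)
      finally show ?thesis .
    qed
    hence "Sg us (\<lambda>x. f x + g x) \<le> Sg ts f + Sg ss g" by (rule avg_le_Sg)
    moreover have "pD (\<lambda>x. f x + g x) \<le> Sg us (\<lambda>x. f x + g x)" by (rule pD_props[OF fg usne])
    ultimately show ?thesis by simp
  qed
  have "pD (\<lambda>x. f x + g x) - Sg ss g \<le> pD f" if ss: "ss \<noteq> []" for ss
    using main[OF _ ss] by (intro pD_greatest) (simp add: algebra_simps)
  hence "pD (\<lambda>x. f x + g x) - pD f \<le> pD g"
    by (intro pD_greatest) (simp add: algebra_simps)
  thus ?thesis by simp
qed

lemma pD_scale_le:
  fixes f :: "'a::ab_group_add \<Rightarrow> real"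
  assumes f: "\<And>x. \<bar>f x\<bar> \<le> B" and c: "c > 0"
  shows "pD (\<lambda>x. c * f x) \<le> c * pD f"
proof -
  have cf: "\<And>x. \<bar>c * f x\<bar> \<le> c * B" using f c by (simp add: abs_mult mult_left_mono)
  have "pD (\<lambda>x. c * f x) / c \<le> Sg ts f" if ts: "ts \<noteq> []" for ts
  proof -
    have "avg ts (\<lambda>x. c * f x) x \<le> c * Sg ts f" for x
    proof -
      have "avg ts (\<lambda>x. c * f x) x = c * avg ts f x"
        unfolding avg_def by (simp add: sum_list_const_mult)
      also have "\<dots> \<le> c * Sg ts f" using Sg_props(1)[OF f ts] c by simp
      finally show ?thesis .
    qed
    hence "Sg ts (\<lambda>x. c * f x) \<le> c * Sg ts f" by (rule avg_le_Sg)
    moreover have "pD (\<lambda>x. c * f x) \<le> Sg ts (\<lambda>x. c * f x)" by (rule pD_props[OF cf ts])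
    ultimately show ?thesis using c by (simp add: field_simps)
  qed
  hence "pD (\<lambda>x. c * f x) / c \<le> pD f" by (intro pD_greatest)
  thus ?thesis using c by (simp add: field_simps)
qed

lemma pD_scale:
  fixes f :: "'a::ab_group_add \<Rightarrow> real"
  assumes f: "\<And>x. \<bar>f x\<bar> \<le> B" and c: "c > 0"
  shows "pD (\<lambda>x. c * f x) = c * pD f"
proof -
  have cf: "\<And>x. \<bar>c * f x\<bar> \<le> c * B" using f c by (simp add: abs_mult mult_left_mono)
  have "pD (\<lambda>x. (1/c) * (c * f x)) \<le> (1/c) * pD (\<lambda>x. c * f x)"
    by (rule pD_scale_le[OF cf]) (use c in simp)
  hence "pD f \<le> (1/c) * pD (\<lambda>x. c * f x)" using c by simp
  hence "c * pD f \<le> pD (\<lambda>x. c * f x)" using c by (simp add: field_simps)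
  moreover have "pD (\<lambda>x. c * f x) \<le> c * pD f" by (rule pD_scale_le[OF f c])
  ultimately show ?thesis by simp
qed

lemma telescope_list:
  "sum_list (map (\<lambda>k. F k - F (Suc k)) [0..<N]) = F 0 - (F N :: real)"
  by (induction N) auto

lemma pD_shift:
  fixes f :: "'a::ab_group_add \<Rightarrow> real"
  assumes f: "\<And>x. \<bar>f x\<bar> \<le> B"
  shows "pD (\<lambda>x. f x + (-1) * f (x + t)) \<le> 0"
proof (rule ccontr)
  assume "\<not> ?thesis"
  hence pos: "pD (\<lambda>x. f x + (-1) * f (x + t)) > 0" by simp
  have B0: "B \<ge> 0" using f[of 0] by simp
  obtain N :: nat where N: "2 * B / pD (\<lambda>x. f x + (-1) * f (x + t)) < real N" using reals_Archimedean2 by blast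
  hence Npos: "N > 0" using B0 pos by (metis divide_nonneg_pos mult_nonneg_nonneg not_gr_zero of_nat_0 not_less zero_le_numeral)
  define kt where "kt (k::nat) = (\<Sum>i<k. t)" for k
  define ts where "ts = map kt [0..<N]"
  have ts: "ts \<noteq> []" using Npos ts_def by simp
  have bd: "\<bar>f x + (-1) * f (x + t)\<bar> \<le> 2 * B" for x
    using f[of x] f[of "x + t"] by (simp add: abs_le_iff)
  have "avg ts (\<lambda>x. f x + (-1) * f (x + t)) x \<le> 2 * B / real N" for x
  proof -
    have "sum_list (map (\<lambda>s. f (x + s) + (-1) * f (x + s + t)) ts)
        = sum_list (map (\<lambda>k. (\<lambda>k. f (x + kt k)) k - (\<lambda>k. f (x + kt k)) (Suc k)) [0..<N])"
      unfolding ts_def by (simp add: kt_def add_ac comp_def)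
    also have "\<dots> = f (x + kt 0) - f (x + kt N)" by (rule telescope_list)
    also have "\<dots> \<le> 2 * B" using f[of "x + kt 0"] f[of "x + kt N"] by (simp add: abs_le_iff)
    finally show ?thesis unfolding avg_def ts_def using Npos by (simp add: field_simps)
  qed
  hence "Sg ts (\<lambda>x. f x + (-1) * f (x + t)) \<le> 2 * B / real N" by (rule avg_le_Sg)
  moreover have "pD (\<lambda>x. f x + (-1) * f (x + t)) \<le> Sg ts (\<lambda>x. f x + (-1) * f (x + t))"
    by (rule pD_props[where B = "2 * B"]) (use bd ts in auto)
  ultimately have "pD (\<lambda>x. f x + (-1) * f (x + t)) \<le> 2 * B / real N" by simp
  hence "pD (\<lambda>x. f x + (-1) * f (x + t)) * real N \<le> 2 * B" using Npos by (simp add: field_simps)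
  moreover have "2 * B < pD (\<lambda>x. f x + (-1) * f (x + t)) * real N" using N pos by (simp add: field_simps)
  ultimately show False by simp
qed

definition is_mean :: "(('a::ab_group_add \<Rightarrow> real) \<Rightarrow> real) \<Rightarrow> bool" where
  "is_mean m \<longleftrightarrow>
     (\<forall>f g. bddf f \<longrightarrow> bddf g \<longrightarrow> m (\<lambda>x. f x + g x) = m f + m g)
   \<and> (\<forall>f c. bddf f \<longrightarrow> m (\<lambda>x. c * f x) = c * m f)
   \<and> (\<forall>f B. (\<forall>x. \<bar>f x\<bar> \<le> B) \<longrightarrow> \<bar>m f\<bar> \<le> B)
   \<and> (\<forall>c. m (\<lambda>_. c) = c)
   \<and> (\<forall>f t. bddf f \<longrightarrow> m (\<lambda>x. f (x + t)) = m f)"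

lemma mean_exists: "\<exists>m :: ('a::ab_group_add \<Rightarrow> real) \<Rightarrow> real. is_mean m"
proof -
  let ?S = "{f :: 'a \<Rightarrow> real. bddf f}"
  have S0: "(\<lambda>_. 0) \<in> ?S" unfolding bddf_def by auto
  have Sadd: "\<And>f g. f\<in>?S \<Longrightarrow> g\<in>?S \<Longrightarrow> (\<lambda>x. f x + g x) \<in> ?S"
  proof -
    fix f g assume "f \<in> ?S" "g \<in> ?S"
    then obtain B1 B2 where "\<And>x. \<bar>f x\<bar> \<le> B1" "\<And>x. \<bar>g x\<bar> \<le> B2" unfolding bddf_def by auto
    hence "\<bar>f x + g x\<bar> \<le> B1 + B2" for x by (meson abs_triangle_ineq add_mono order_trans)
    thus "(\<lambda>x. f x + g x) \<in> ?S" unfolding bddf_def by auto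
  qed
  have Ssc: "\<And>f c. f\<in>?S \<Longrightarrow> (\<lambda>x. c * f x) \<in> ?S"
  proof -
    fix f c assume "f \<in> ?S"
    then obtain B where B: "\<And>x. \<bar>f x\<bar> \<le> B" unfolding bddf_def by auto
    have "\<bar>c * f x\<bar> \<le> \<bar>c\<bar> * B" for x using B[of x] by (simp add: abs_mult mult_left_mono)
    thus "(\<lambda>x. c * f x) \<in> ?S" unfolding bddf_def by auto
  qed
  have padd: "\<And>f g. f\<in>?S \<Longrightarrow> g\<in>?S \<Longrightarrow> pD (\<lambda>x. f x + g x) \<le> pD f + pD g"
    unfolding bddf_def using pD_add by blast
  have psc: "\<And>f c. f\<in>?S \<Longrightarrow> c > 0 \<Longrightarrow> pD (\<lambda>x. c * f x) = c * pD f"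
    unfolding bddf_def using pD_scale by blast
  obtain L where Ladd: "\<forall>f\<in>?S. \<forall>g\<in>?S. L (\<lambda>x. f x + g x) = L f + L g"
    and Lsc: "\<forall>f\<in>?S. \<forall>c. L (\<lambda>x. c * f x) = c * L f" and Lp: "\<forall>f\<in>?S. L f \<le> pD f"
    using HB[where S = ?S and p = pD, OF S0 Sadd Ssc padd psc] by blast
  have up: "L f \<le> B" if B: "\<And>x. \<bar>f x\<bar> \<le> B" for f :: "'a \<Rightarrow> real" and B
  proof -
    have "f \<in> ?S" using B unfolding bddf_def by auto
    hence "L f \<le> pD f" using Lp by auto
    also have "\<dots> \<le> Sg [0] f" by (rule pD_props[OF B]) simp
    also have "\<dots> \<le> B" by (rule Sg_props(2)[OF B]) simp
    finally show ?thesis .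
  qed
  have bnd: "\<bar>L f\<bar> \<le> B" if B: "\<And>x. \<bar>f x\<bar> \<le> B" for f :: "'a \<Rightarrow> real" and B
  proof -
    have fS: "f \<in> ?S" using B unfolding bddf_def by auto
    have "L (\<lambda>x. (-1) * f x) \<le> B" by (rule up) (use B in simp)
    moreover have "L (\<lambda>x. (-1) * f x) = (-1) * L f" using Lsc fS by blast
    ultimately have "- L f \<le> B" by simp
    moreover have "L f \<le> B" by (rule up) (rule B)
    ultimately show ?thesis by simp
  qed
  have const: "L (\<lambda>_. c) = c" for c
  proof -
    have cS: "(\<lambda>_. c) \<in> ?S" unfolding bddf_def by auto
    have u: "L (\<lambda>_. c) \<le> c"
    proof -
      have "L (\<lambda>_. c) \<le> pD (\<lambda>_::'a. c)" by (rule Lp[rule_format, OF cS])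
      also have "\<dots> \<le> Sg [0::'a] (\<lambda>_. c)" by (rule pD_props[of _ "\<bar>c\<bar>"]) auto
      also have "\<dots> \<le> c" by (rule avg_le_Sg) (simp add: avg_def)
      finally show ?thesis .
    qed
    have "L (\<lambda>_. - c) \<le> - c"
    proof -
      have cS': "(\<lambda>_. -c) \<in> ?S" unfolding bddf_def by auto
      have "L (\<lambda>_. -c) \<le> pD (\<lambda>_::'a. -c)" by (rule Lp[rule_format, OF cS'])
      also have "\<dots> \<le> Sg [0::'a] (\<lambda>_. -c)" by (rule pD_props[of _ "\<bar>c\<bar>"]) auto
      also have "\<dots> \<le> -c" by (rule avg_le_Sg) (simp add: avg_def)
      finally show ?thesis .
    qed
    moreover have "L (\<lambda>x. (-1) * (\<lambda>_. c) x) = (-1) * L (\<lambda>_. c)" by (rule Lsc[rule_format, OF cS])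
    ultimately show ?thesis using u by simp
  qed
  have shift: "L (\<lambda>x. f (x + t)) = L f" if fS: "bddf f" for f :: "'a \<Rightarrow> real" and t
  proof -
    have le: "L g \<le> L (\<lambda>x. g (x + t))" if gS: "bddf g" for g :: "'a \<Rightarrow> real"
    proof -
      obtain B where B: "\<And>x. \<bar>g x\<bar> \<le> B" using gS unfolding bddf_def by auto
      have gtS: "(\<lambda>x. g (x + t)) \<in> ?S" using B unfolding bddf_def by auto
      have g1: "(\<lambda>x. (-1) * g (x + t)) \<in> ?S" using Ssc[OF gtS] .
      have gS': "g \<in> ?S" using gS by simp
      have "L (\<lambda>x. g x + (-1) * g (x + t)) \<le> pD (\<lambda>x. g x + (-1) * g (x + t))"
        by (rule Lp[rule_format, OF Sadd[OF gS' g1]])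
      also have "\<dots> \<le> 0" by (rule pD_shift[OF B])
      finally have "L (\<lambda>x. g x + (-1) * g (x + t)) \<le> 0" .
      moreover have "L (\<lambda>x. g x + (-1) * g (x + t)) = L g + L (\<lambda>x. (-1) * g (x + t))"
        by (rule Ladd[rule_format, OF gS' g1])
      moreover have "L (\<lambda>x. (-1) * g (x + t)) = (-1) * L (\<lambda>x. g (x + t))"
        by (rule Lsc[rule_format, OF gtS])
      ultimately show ?thesis by simp
    qed
    have fm: "bddf (\<lambda>x. (-1) * f x)" using Ssc[of f "-1"] fS by simp
    have "L (\<lambda>x. (-1) * f x) \<le> L (\<lambda>x. (-1) * f (x + t))" using le[OF fm] by simp
    moreover have ftS: "(\<lambda>x. f (x + t)) \<in> ?S" using fS unfolding bddf_def by auto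
    moreover have "L (\<lambda>x. (-1) * f (x + t)) = (-1) * L (\<lambda>x. f (x + t))"
        by (rule Lsc[rule_format, OF ftS])
    moreover have "L (\<lambda>x. (-1) * f x) = (-1) * L f"
        by (rule Lsc[rule_format]) (use fS in simp)
    ultimately have "L (\<lambda>x. f (x + t)) \<le> L f" by simp
    thus ?thesis using le[OF fS] by simp
  qed
  have "is_mean L"
    unfolding is_mean_def using Ladd Lsc bnd const shift by auto
  thus ?thesis by blast
qed


fun Mn :: "(('a::ab_group_add \<Rightarrow> real) \<Rightarrow> real) \<Rightarrow> nat \<Rightarrow> ('a list \<Rightarrow> real) \<Rightarrow> real" where
  "Mn m 0 h = h []"
| "Mn m (Suc n) h = m (\<lambda>t. Mn m n (\<lambda>ts. h (t # ts)))"

definition bddl :: "('b list \<Rightarrow> real) \<Rightarrow> bool" where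
  "bddl h \<longleftrightarrow> (\<exists>B. \<forall>ts. \<bar>h ts\<bar> \<le> B)"

context
  fixes m :: "('a::ab_group_add \<Rightarrow> real) \<Rightarrow> real"
  assumes m: "is_mean m"
begin

lemma m_add: "bddf f \<Longrightarrow> bddf g \<Longrightarrow> m (\<lambda>x. f x + g x) = m f + m g"
  and m_sc: "bddf f \<Longrightarrow> m (\<lambda>x. c * f x) = c * m f"
  and m_bnd: "(\<And>x. \<bar>f x\<bar> \<le> B) \<Longrightarrow> \<bar>m f\<bar> \<le> B"
  and m_const: "m (\<lambda>_. c) = c"
  and m_shift: "bddf f \<Longrightarrow> m (\<lambda>x. f (x + t)) = m f"
  using m unfolding is_mean_def by blast+

lemma Mn_bound: "(\<And>ts. \<bar>h ts\<bar> \<le> B) \<Longrightarrow> \<bar>Mn m n h\<bar> \<le> B"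
proof (induction n arbitrary: h)
  case 0 thus ?case by simp
next
  case (Suc n)
  show ?case unfolding Mn.simps by (rule m_bnd) (rule Suc.IH, rule Suc.prems)
qed

lemma bddl_bddf: "bddl h \<Longrightarrow> bddf (\<lambda>t. Mn m n (\<lambda>ts. h (t # ts)))"
proof -
  assume "bddl h"
  then obtain B where "\<And>ts. \<bar>h ts\<bar> \<le> B" unfolding bddl_def by auto
  hence "\<bar>Mn m n (\<lambda>ts. h (t # ts))\<bar> \<le> B" for t by (intro Mn_bound) auto
  thus ?thesis unfolding bddf_def by blast
qed

lemma bddl_Cons: "bddl h \<Longrightarrow> bddl (\<lambda>ts. h (t # ts))"
  unfolding bddl_def by auto

lemma Mn_cong: "(\<And>ts. length ts = n \<Longrightarrow> h ts = h' ts) \<Longrightarrow> Mn m n h = Mn m n h'"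
proof (induction n arbitrary: h h')
  case 0 thus ?case by simp
next
  case (Suc n)
  have "\<And>t. Mn m n (\<lambda>ts. h (t # ts)) = Mn m n (\<lambda>ts. h' (t # ts))"
    by (rule Suc.IH) (simp add: Suc.prems)
  thus ?case by simp
qed

lemma Mn_const: "Mn m n (\<lambda>_. c) = c"
  by (induction n) (simp_all add: m_const)

lemma Mn_add: "bddl h \<Longrightarrow> bddl g \<Longrightarrow> Mn m n (\<lambda>ts. h ts + g ts) = Mn m n h + Mn m n g"
proof (induction n arbitrary: h g)
  case 0 thus ?case by simp
next
  case (Suc n)
  have "Mn m (Suc n) (\<lambda>ts. h ts + g ts) = m (\<lambda>t. Mn m n (\<lambda>ts. h (t # ts)) + Mn m n (\<lambda>ts. g (t # ts)))"
    using Suc.IH[OF bddl_Cons[OF Suc.prems(1)] bddl_Cons[OF Suc.prems(2)]] by simp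
  also have "\<dots> = Mn m (Suc n) h + Mn m (Suc n) g"
    using m_add[OF bddl_bddf[OF Suc.prems(1)] bddl_bddf[OF Suc.prems(2)]] by simp
  finally show ?case .
qed

lemma Mn_sc: "bddl h \<Longrightarrow> Mn m n (\<lambda>ts. c * h ts) = c * Mn m n h"
proof (induction n arbitrary: h)
  case 0 thus ?case by simp
next
  case (Suc n)
  have "Mn m (Suc n) (\<lambda>ts. c * h ts) = m (\<lambda>t. c * Mn m n (\<lambda>ts. h (t # ts)))"
    using Suc.IH[OF bddl_Cons[OF Suc.prems(1)]] by simp
  also have "\<dots> = c * Mn m (Suc n) h"
    using m_sc[OF bddl_bddf[OF Suc.prems(1)]] by simp
  finally show ?case .
qed

lemma bddl_add: "bddl h \<Longrightarrow> bddl g \<Longrightarrow> bddl (\<lambda>ts. h ts + g ts)"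
proof -
  assume "bddl h" "bddl g"
  then obtain B1 B2 where "\<And>ts. \<bar>h ts\<bar> \<le> B1" "\<And>ts. \<bar>g ts\<bar> \<le> B2" unfolding bddl_def by auto
  hence "\<bar>h ts + g ts\<bar> \<le> B1 + B2" for ts by (meson abs_triangle_ineq add_mono order_trans)
  thus ?thesis unfolding bddl_def by blast
qed

lemma bddl_sc: "bddl h \<Longrightarrow> bddl (\<lambda>ts. c * h ts)"
proof -
  assume "bddl h"
  then obtain B where B: "\<And>ts. \<bar>h ts\<bar> \<le> B" unfolding bddl_def by auto
  have "\<bar>c * h ts\<bar> \<le> \<bar>c\<bar> * B" for ts using B[of ts] by (simp add: abs_mult mult_left_mono)
  thus ?thesis unfolding bddl_def by blast
qed

lemma bddl_diff: "bddl h \<Longrightarrow> bddl g \<Longrightarrow> bddl (\<lambda>ts. h ts - g ts)"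
  using bddl_add[of h "\<lambda>ts. (-1) * g ts"] bddl_sc[of g "-1"] by simp

lemma Mn_diff: "bddl h \<Longrightarrow> bddl g \<Longrightarrow> Mn m n (\<lambda>ts. h ts - g ts) = Mn m n h - Mn m n g"
  using Mn_add[of h "\<lambda>ts. (-1) * g ts" n] Mn_sc[of g n "-1"] bddl_sc[of g "-1"] by simp

lemma bddl_sum: "finite I \<Longrightarrow> (\<And>i. i \<in> I \<Longrightarrow> bddl (g i)) \<Longrightarrow> bddl (\<lambda>ts. \<Sum>i\<in>I. g i ts)"
proof (induction I rule: finite_induct)
  case empty thus ?case unfolding bddl_def by auto
next
  case (insert y F')
  have "bddl (\<lambda>ts. g y ts + (\<Sum>i\<in>F'. g i ts))"
    by (rule bddl_add) (use insert in auto)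
  thus ?case using insert(1,2) by simp
qed

lemma Mn_sum: "finite I \<Longrightarrow> (\<And>i. i \<in> I \<Longrightarrow> bddl (g i)) \<Longrightarrow>
   Mn m n (\<lambda>ts. \<Sum>i\<in>I. g i ts) = (\<Sum>i\<in>I. Mn m n (g i))"
proof (induction I rule: finite_induct)
  case empty thus ?case by (simp add: Mn_const)
next
  case (insert x F)
  have bF: "bddl (\<lambda>ts. \<Sum>i\<in>F. g i ts)"
    by (rule bddl_sum) (use insert in auto)
  have "Mn m n (\<lambda>ts. \<Sum>i\<in>insert x F. g i ts) = Mn m n (\<lambda>ts. g x ts + (\<Sum>i\<in>F. g i ts))"
    using insert(1,2) by simp
  also have "\<dots> = Mn m n (g x) + Mn m n (\<lambda>ts. \<Sum>i\<in>F. g i ts)"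
    by (rule Mn_add) (use insert.prems bF in auto)
  finally show ?case using insert by simp
qed

lemma Mn_drop:
  "i \<le> n \<Longrightarrow> length cs = i \<Longrightarrow> bddl h \<Longrightarrow>
   Mn m (Suc n) (\<lambda>ts. h (map2 (+) (take i ts) cs @ drop (Suc i) ts)) = Mn m n h"
proof (induction i arbitrary: n cs h)
  case 0
  thus ?case by (simp add: m_const)
next
  case (Suc i)
  obtain c cs' where cs: "cs = c # cs'" and lcs: "length cs' = i" using Suc.prems(2) by (cases cs) auto
  obtain n' where n: "n = Suc n'" using Suc.prems(1) by (cases n) auto
  have "Mn m (Suc n) (\<lambda>ts. h (map2 (+) (take (Suc i) ts) cs @ drop (Suc (Suc i)) ts))
      = m (\<lambda>t. Mn m (Suc n') (\<lambda>ts. h ((t + c) # (map2 (+) (take i ts) cs' @ drop (Suc i) ts))))"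
    by (simp add: n cs)
  also have "\<dots> = m (\<lambda>t. Mn m n' (\<lambda>ts. h ((t + c) # ts)))"
  proof -
    have "\<And>t. Mn m (Suc n') (\<lambda>ts. (\<lambda>l. h ((t + c) # l)) (map2 (+) (take i ts) cs' @ drop (Suc i) ts))
       = Mn m n' (\<lambda>l. h ((t + c) # l))"
      by (rule Suc.IH) (use Suc.prems n lcs bddl_Cons in auto)
    thus ?thesis by simp
  qed
  also have "\<dots> = m (\<lambda>t. Mn m n' (\<lambda>ts. h (t # ts)))"
    using m_shift[OF bddl_bddf[OF Suc.prems(3)], of n' c] by simp
  finally show ?case by (simp add: n)
qed

definition kap :: "nat \<Rightarrow> (('x \<times> 'a) list \<Rightarrow> real) \<Rightarrow> ('x list \<Rightarrow> real)" where
  "kap n f = (\<lambda>xs. if length xs = n then Mn m n (\<lambda>ts. f (zip xs ts)) else 0)"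

lemma Cb_bddl: "f \<in> Cb n \<Longrightarrow> bddl f"
proof -
  assume "f \<in> Cb n"
  then obtain B where B: "\<And>ys. length ys = n \<Longrightarrow> \<bar>f ys\<bar> \<le> B" and z: "\<And>ys. length ys \<noteq> n \<Longrightarrow> f ys = 0"
    unfolding Cb_def by auto
  have "\<bar>f ys\<bar> \<le> max B 0" for ys using B[of ys] z[of ys] by (cases "length ys = n") auto
  thus ?thesis unfolding bddl_def by blast
qed


lemma bddl_comp: "bddl f \<Longrightarrow> bddl (\<lambda>ts. f (g ts))"
  unfolding bddl_def by auto

lemma kap_Cb: "f \<in> Cb n \<Longrightarrow> kap n f \<in> Cb n"
proof -
  assume f: "f \<in> Cb n"
  then obtain B where B: "\<And>ys. \<bar>f ys\<bar> \<le> B" using Cb_bddl unfolding bddl_def by blast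
  have 1: "\<bar>kap n f xs\<bar> \<le> B" for xs
    unfolding kap_def using B Mn_bound[of "\<lambda>ts. f (zip xs ts)" B n] B[of "[]"] by auto
  show ?thesis unfolding Cb_def mem_Collect_eq
  proof (intro conjI)
    show "\<exists>B. \<forall>ys. length ys = n \<longrightarrow> \<bar>kap n f ys\<bar> \<le> B" using 1 by blast
    show "\<forall>ys. length ys \<noteq> n \<longrightarrow> kap n f ys = 0" by (simp add: kap_def)
  qed
qed

lemma kap_add: "f \<in> Cb n \<Longrightarrow> g \<in> Cb n \<Longrightarrow> kap n (\<lambda>es. f es + g es) = (\<lambda>xs. kap n f xs + kap n g xs)"
proof -
  assume "f \<in> Cb n" "g \<in> Cb n"
  hence "bddl f" "bddl g" using Cb_bddl by auto
  thus ?thesis unfolding kap_def by (intro ext) (auto intro!: Mn_add bddl_comp)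
qed

lemma kap_sc: "f \<in> Cb n \<Longrightarrow> kap n (\<lambda>es. c * f es) = (\<lambda>xs. c * kap n f xs)"
proof -
  assume "f \<in> Cb n"
  hence "bddl f" using Cb_bddl by auto
  thus ?thesis unfolding kap_def by (intro ext) (auto intro!: Mn_sc bddl_comp)
qed

lemma kap_pib: "f \<in> Cb n \<Longrightarrow> kap n (pib n f) = f"
proof (rule ext)
  fix xs assume f: "f \<in> Cb n"
  show "kap n (pib n f) xs = f xs"
  proof (cases "length xs = n")
    case True
    have "Mn m n (\<lambda>ts. f (map fst (zip xs ts))) = Mn m n (\<lambda>_. f xs)"
      by (rule Mn_cong) (simp add: True)
    thus ?thesis unfolding kap_def pib_def using True by (simp add: Mn_const)
  next
    case False thus ?thesis using f unfolding kap_def Cb_def by auto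
  qed
qed

lemma kap_supnorm: "(f :: ('x \<times> 'a) list \<Rightarrow> real) \<in> Cb n \<Longrightarrow> supnorm n (kap n f) \<le> supnorm n f"
proof -
  assume f: "f \<in> Cb n"
  obtain B where B: "\<And>ys. length ys = n \<Longrightarrow> \<bar>f ys\<bar> \<le> B" and z: "\<And>ys. length ys \<noteq> n \<Longrightarrow> f ys = 0"
    using f unfolding Cb_def by auto
  have ne: "{ys :: ('x \<times> 'a) list. length ys = n} \<noteq> {}" by (auto intro!: exI[of _ "replicate n undefined"])
  have bd: "bdd_above ((\<lambda>ys. \<bar>f ys\<bar>) ` {ys. length ys = n})" using B by (auto intro!: bdd_aboveI[of _ B])
  have up: "\<bar>f ys\<bar> \<le> supnorm n f" if "length ys = n" for ys
    unfolding supnorm_def by (rule cSUP_upper[OF _ bd]) (use that in simp)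
  have nn: "0 \<le> supnorm n f" using up[of "replicate n undefined"] by simp
  have all: "\<bar>f ys\<bar> \<le> supnorm n f" for ys using up[of ys] z[of ys] nn by (cases "length ys = n") auto
  have ne2: "{ys :: 'x list. length ys = n} \<noteq> {}" by (auto intro!: exI[of _ "replicate n undefined"])
  show ?thesis unfolding supnorm_def[of n "kap n f"]
  proof (rule cSUP_least[OF ne2])
    fix xs :: "'x list" assume "xs \<in> {ys. length ys = n}"
    show "\<bar>kap n f xs\<bar> \<le> supnorm n f"
      unfolding kap_def using Mn_bound[of "\<lambda>ts. f (zip xs ts)" "supnorm n f" n] all nn by auto
  qed
qed

lemma listA:
  assumes "length xs = Suc n" "length (ts :: 'a list) = Suc n" "i \<le> n"
  shows "zip (take i xs @ drop (Suc i) xs) (map2 (+) (take i ts) (replicate i 0) @ drop (Suc i) ts)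
       = take i (zip xs ts) @ drop (Suc i) (zip xs ts)"
  by (rule nth_equalityI) (use assms in \<open>auto simp: nth_append min_def\<close>)

lemma listB:
  assumes "length xs = Suc n" "length ts = Suc n" "i \<le> n"
  shows "zip (map (\<lambda>y. q y (xs ! i)) (take i xs) @ drop (Suc i) xs)
             (map2 (+) (take i ts) (map (\<lambda>x. \<phi> x (xs ! i)) (take i xs)) @ drop (Suc i) ts)
       = map (\<lambda>y. ext_op q \<phi> y (zip xs ts ! i)) (take i (zip xs ts)) @ drop (Suc i) (zip xs ts)"
  by (rule nth_equalityI) (use assms in \<open>auto simp: nth_append min_def ext_op_def add.commute\<close>)


lemma kap_cob:
  fixes f :: "('x \<times> 'a) list \<Rightarrow> real" and q :: "'x \<Rightarrow> 'x \<Rightarrow> 'x" and \<phi> :: "'x \<Rightarrow> 'x \<Rightarrow> 'a"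
  assumes f: "f \<in> Cb n"
  shows "cob q n (kap n f) = kap (Suc n) (cob (ext_op q \<phi>) n f)"
proof (rule ext)
  fix xs :: "'x list"
  have bf: "bddl f" using Cb_bddl[OF f] .
  show "cob q n (kap n f) xs = kap (Suc n) (cob (ext_op q \<phi>) n f) xs"
  proof (cases "length xs = Suc n")
    case False thus ?thesis unfolding cob_def kap_def by simp
  next
    case lx: True
    define TA where "TA i ts = take i (zip xs ts) @ drop (Suc i) (zip xs ts)" for i and ts :: "'a list"
    define TB where "TB i ts = map (\<lambda>y. ext_op q \<phi> y (zip xs ts ! i)) (take i (zip xs ts)) @ drop (Suc i) (zip xs ts)"
      for i and ts :: "'a list"
    define A where "A i = take i xs @ drop (Suc i) xs" for i
    define B where "B i = map (\<lambda>y. q y (xs ! i)) (take i xs) @ drop (Suc i) xs" for i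
    have lA: "length (A i) = n" "length (B i) = n" if "i \<in> {1..n}" for i
      using that lx unfolding A_def B_def by auto
    have termA: "Mn m (Suc n) (\<lambda>ts. f (TA i ts)) = kap n f (A i)" if i: "i \<in> {1..n}" for i
    proof -
      have "Mn m (Suc n) (\<lambda>ts. f (TA i ts))
          = Mn m (Suc n) (\<lambda>ts. (\<lambda>us. f (zip (A i) us)) (map2 (+) (take i ts) (replicate i 0) @ drop (Suc i) ts))"
        by (rule Mn_cong) (use listA[OF lx _, of _ i] i in \<open>auto simp: TA_def A_def\<close>)
      also have "\<dots> = Mn m n (\<lambda>us. f (zip (A i) us))"
        by (rule Mn_drop) (use i bf bddl_comp in auto)
      finally show ?thesis unfolding kap_def using lA[OF i] by simp
    qed
    have termB: "Mn m (Suc n) (\<lambda>ts. f (TB i ts)) = kap n f (B i)" if i: "i \<in> {1..n}" for i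
    proof -
      have "Mn m (Suc n) (\<lambda>ts. f (TB i ts))
          = Mn m (Suc n) (\<lambda>ts. (\<lambda>us. f (zip (B i) us))
               (map2 (+) (take i ts) (map (\<lambda>x. \<phi> x (xs ! i)) (take i xs)) @ drop (Suc i) ts))"
        by (rule Mn_cong) (use listB[OF lx _, of _ i q \<phi>] i in \<open>auto simp: TB_def B_def\<close>)
      also have "\<dots> = Mn m n (\<lambda>us. f (zip (B i) us))"
        by (rule Mn_drop) (use i bf bddl_comp lx in auto)
      finally show ?thesis unfolding kap_def using lA[OF i] by simp
    qed
    have "kap (Suc n) (cob (ext_op q \<phi>) n f) xs
        = Mn m (Suc n) (\<lambda>ts. \<Sum>i\<in>{1..n}. (-1) ^ Suc i * (f (TA i ts) - f (TB i ts)))"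
      unfolding kap_def if_P[OF lx]
      by (rule Mn_cong) (simp add: cob_def TA_def TB_def lx)
    also have "\<dots> = (\<Sum>i\<in>{1..n}. Mn m (Suc n) (\<lambda>ts. (-1) ^ Suc i * (f (TA i ts) - f (TB i ts))))"
      by (rule Mn_sum) (simp, intro bddl_sc bddl_diff bddl_comp[OF bf])
    also have "\<dots> = (\<Sum>i\<in>{1..n}. (-1) ^ Suc i * (Mn m (Suc n) (\<lambda>ts. f (TA i ts)) - Mn m (Suc n) (\<lambda>ts. f (TB i ts))))"
    proof (rule sum.cong[OF refl])
      fix i
      show "Mn m (Suc n) (\<lambda>ts. (-1) ^ Suc i * (f (TA i ts) - f (TB i ts)))
          = (-1) ^ Suc i * (Mn m (Suc n) (\<lambda>ts. f (TA i ts)) - Mn m (Suc n) (\<lambda>ts. f (TB i ts)))"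
        by (simp only: Mn_sc[OF bddl_diff[OF bddl_comp[OF bf] bddl_comp[OF bf]]]
                       Mn_diff[OF bddl_comp[OF bf] bddl_comp[OF bf]])
    qed
    also have "\<dots> = (\<Sum>i\<in>{1..n}. (-1) ^ Suc i * (kap n f (A i) - kap n f (B i)))"
      by (rule sum.cong[OF refl]) (simp only: termA termB)
    also have "\<dots> = cob q n (kap n f) xs"
      unfolding cob_def A_def B_def using lx by simp
    finally show ?thesis by simp
  qed
qed

end


lemma Cb_diff: "f \<in> Cb n \<Longrightarrow> g \<in> Cb n \<Longrightarrow> (\<lambda>xs. f xs - g xs) \<in> Cb n"
proof -
  assume f: "f \<in> Cb n" and g: "g \<in> Cb n"
  then obtain B1 B2 where B1: "\<And>ys. length ys = n \<Longrightarrow> \<bar>f ys\<bar> \<le> B1"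
    and B2: "\<And>ys. length ys = n \<Longrightarrow> \<bar>g ys\<bar> \<le> B2" unfolding Cb_def by blast
  have "\<bar>f ys - g ys\<bar> \<le> B1 + B2" if "length ys = n" for ys
    using B1[OF that] B2[OF that] by (simp add: abs_le_iff)
  thus ?thesis using f g unfolding Cb_def by auto
qed

theorem mainTheorem18:
  fixes q :: "'x \<Rightarrow> 'x \<Rightarrow> 'x" and \<phi> :: "'x \<Rightarrow> 'x \<Rightarrow> 'a::ab_group_add"
  assumes "quandle q" and "quandle_2cocycle q \<phi>"
  shows "(\<exists>\<kappa> :: nat \<Rightarrow> (('x \<times> 'a) list \<Rightarrow> real) \<Rightarrow> ('x list \<Rightarrow> real).
            (\<forall>n. \<forall>f\<in>Cb n. \<kappa> n f \<in> Cb n)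
          \<and> (\<forall>n. \<forall>f\<in>Cb n. \<forall>g\<in>Cb n. \<kappa> n (\<lambda>es. f es + g es) = (\<lambda>xs. \<kappa> n f xs + \<kappa> n g xs))
          \<and> (\<forall>n c. \<forall>f\<in>Cb n. \<kappa> n (\<lambda>es. c * f es) = (\<lambda>xs. c * \<kappa> n f xs))
          \<and> (\<forall>n. \<forall>f\<in>Cb n. cob q n (\<kappa> n f) = \<kappa> (Suc n) (cob (ext_op q \<phi>) n f))
          \<and> (\<forall>n\<ge>1. \<forall>f\<in>Cb n. supnorm n (\<kappa> n f) \<le> supnorm n f)
          \<and> (\<forall>n\<ge>1. \<forall>f\<in>Cb n. \<kappa> n (pib n f) = f))
       \<and> (\<forall>n\<ge>1. \<forall>f\<in>Zb q n. \<forall>g\<in>Zb q n.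
            cohomologous (ext_op q \<phi>) n (pib n f) (pib n g) \<longrightarrow> cohomologous q n f g)"
proof -
  obtain m :: "('a \<Rightarrow> real) \<Rightarrow> real" where m: "is_mean m" using mean_exists by blast
  let ?K = "kap m :: nat \<Rightarrow> (('x \<times> 'a) list \<Rightarrow> real) \<Rightarrow> ('x list \<Rightarrow> real)"
  have part1: "(\<forall>n. \<forall>f\<in>Cb n. ?K n f \<in> Cb n)
          \<and> (\<forall>n. \<forall>f\<in>Cb n. \<forall>g\<in>Cb n. ?K n (\<lambda>es. f es + g es) = (\<lambda>xs. ?K n f xs + ?K n g xs))
          \<and> (\<forall>n c. \<forall>f\<in>Cb n. ?K n (\<lambda>es. c * f es) = (\<lambda>xs. c * ?K n f xs))
          \<and> (\<forall>n. \<forall>f\<in>Cb n. cob q n (?K n f) = ?K (Suc n) (cob (ext_op q \<phi>) n f))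
          \<and> (\<forall>n\<ge>1. \<forall>f\<in>Cb n. supnorm n (?K n f) \<le> supnorm n f)
          \<and> (\<forall>n\<ge>1. \<forall>f\<in>Cb n. ?K n (pib n f) = f)"
    using kap_Cb[OF m] kap_add[OF m] kap_sc[OF m] kap_cob[OF m] kap_supnorm[OF m] kap_pib[OF m]
    by blast
  have part2: "\<forall>n\<ge>1. \<forall>f\<in>Zb q n. \<forall>g\<in>Zb q n.
            cohomologous (ext_op q \<phi>) n (pib n f) (pib n g) \<longrightarrow> cohomologous q n f g"
  proof (intro allI impI ballI)
    fix n :: nat and f g :: "'x list \<Rightarrow> real"
    assume n: "n \<ge> 1" and f: "f \<in> Zb q n" and g: "g \<in> Zb q n"
      and coh: "cohomologous (ext_op q \<phi>) n (pib n f :: ('x \<times> 'a) list \<Rightarrow> real) (pib n g)"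
    obtain k where k: "n = Suc k" using n by (cases n) auto
    have fC: "f \<in> Cb n" and gC: "g \<in> Cb n" using f g unfolding Zb_def by auto
    have dC: "(\<lambda>xs. f xs - g xs) \<in> Cb n" by (rule Cb_diff[OF fC gC])
    from coh obtain h :: "('x \<times> 'a) list \<Rightarrow> real" where hC: "h \<in> Cb k"
      and hE: "cob (ext_op q \<phi>) k h = (\<lambda>ys. pib n f ys - pib n g ys)"
      unfolding cohomologous_def Bb_def k by auto
    have pd: "(\<lambda>ys. pib n f ys - pib n g ys) = (pib n (\<lambda>xs. f xs - g xs) :: ('x \<times> 'a) list \<Rightarrow> real)"
      by (simp add: pib_def)
    have "(\<lambda>xs. f xs - g xs) = ?K n (pib n (\<lambda>xs. f xs - g xs))"
      using kap_pib[OF m dC] by simp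
    also have "\<dots> = ?K (Suc k) (cob (ext_op q \<phi>) k h)" using hE pd k by simp
    also have "\<dots> = cob q k (?K k h)" using kap_cob[OF m hC] by simp
    finally have "(\<lambda>xs. f xs - g xs) = cob q k (?K k h)" .
    moreover have "?K k h \<in> Cb k" by (rule kap_Cb[OF m hC])
    ultimately show "cohomologous q n f g"
      unfolding cohomologous_def Bb_def k by auto
  qed
  show ?thesis using part1 part2 by blast
qed

end
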